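(* Let $X$ be a compact topological space equipped with a continuous action of a strongly sofic monoid $M$, and let $\Sigma=(D_i,\sigma_i)_{i\in I}$ be a strong sofic approximation of $M$. Let $\rho$ and $\rho'$ be continuous pseudometrics on $X$ with $\rho'$ dynamically generating for $(X,M)$. Let $F\subset M$ be finite and $\delta>0$. Then there exist a finite subset $F'\subset M$, $\delta'>0$ and $i_0\in I$ such that $\operatorname{Map}(X,M,\rho',F',\delta',\sigma_i)\subset\operatorname{Map}(X,M,\rho,F,\delta,\sigma_i)$ for all $i\ge i_0$.
   Context: Hamming metric on $\operatorname{Map}(D)$ (maps $D\to D$, $D$ finite non-empty): $d_D^{\mathrm{Ham}}(f,g)=\frac{1}{|D|}|\{v:f(v)\ne g(v)\}|$. A strong sofic approximation of $M$ is a net $(D_i,\sigma_i)_{i\in I}$ over a directed set, $D_i$ non-empty finite, $\sigma_i\colon M\to\operatorname{Map}(D_i)$, with $\sigma_i(1_M)=\mathrm{Id}_{D_i}$; $\lim_i d^{\mathrm{Ham}}_{D_i}(\sigma_i(m_1m_2),\sigma_i(m_1)\sigma_i(m_2))=0$ for all $m_1,m_2$; $\lim_i d^{\mathrm{Ham}}_{D_i}(\sigma_i(m_1),\sigma_i(m_2))=1$ for distinct $m_1,m_2$; and for every finite $K\subset M$ an integer $\Delta_K\ge1$ with $|\sigma_i(k)^{-1}(v)|\le\Delta_K$ for all $i$, $k\in K$, $v\in D_i$. A monoid is strongly sofic iff it has one. A pseudometric $\rho'$ is dynamically generating if for distinct $x,y\in X$ some $m\in M$ has $\rho'(mx,my)>0$.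 For non-empty finite $D$ and a pseudometric $\rho$ on $X$, $\rho_2^D(\varphi,\psi)=(\frac{1}{|D|}\sum_{v\in D}\rho(\varphi(v),\psi(v))^2)^{1/2}$ on $X^D$, $(m\varphi)(v)=m\varphi(v)$, and for finite $F\subset M$, $\delta>0$, $\sigma\colon M\to\operatorname{Map}(D)$: $\operatorname{Map}(X,M,\rho,F,\delta,\sigma)=\{\varphi\in X^D:\rho_2^D(\varphi\circ\sigma(m),m\varphi)\le\delta\ \forall m\in F\}$. *)

theory Defs
  imports "HOL-Analysis.Analysis"
begin

definition directed_rel :: "('i \<Rightarrow> 'i \<Rightarrow> bool) \<Rightarrow> bool" where
  "directed_rel le \<longleftrightarrow> (\<forall>i. le i i) \<and> (\<forall>i j k. le i j \<longrightarrow> le j k \<longrightarrow> le i k)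
     \<and> (\<forall>i j. \<exists>k. le i k \<and> le j k)"

definition net_tendsto :: "('i \<Rightarrow> 'i \<Rightarrow> bool) \<Rightarrow> ('i \<Rightarrow> real) \<Rightarrow> real \<Rightarrow> bool" where
  "net_tendsto le a L \<longleftrightarrow> (\<forall>e>0. \<exists>i0. \<forall>i. le i0 i \<longrightarrow> \<bar>a i - L\<bar> < e)"

definition ham_dist :: "'d set \<Rightarrow> ('d \<Rightarrow> 'd) \<Rightarrow> ('d \<Rightarrow> 'd) \<Rightarrow> real" where
  "ham_dist D f g = real (card {v\<in>D. f v \<noteq> g v}) / real (card D)"

definition strong_sofic_approx ::
  "('i \<Rightarrow> 'i \<Rightarrow> bool) \<Rightarrow> ('i \<Rightarrow> 'd set) \<Rightarrow> ('i \<Rightarrow> 'm::monoid_mult \<Rightarrow> 'd \<Rightarrow> 'd) \<Rightarrow> bool" where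
  "strong_sofic_approx le D \<sigma> \<longleftrightarrow>
     directed_rel le
   \<and> (\<forall>i. finite (D i) \<and> D i \<noteq> {})
   \<and> (\<forall>i m. \<sigma> i m ` D i \<subseteq> D i)
   \<and> (\<forall>i. \<forall>v\<in>D i. \<sigma> i 1 v = v)
   \<and> (\<forall>m1 m2. net_tendsto le (\<lambda>i. ham_dist (D i) (\<sigma> i (m1 * m2)) (\<sigma> i m1 \<circ> \<sigma> i m2)) 0)
   \<and> (\<forall>m1 m2. m1 \<noteq> m2 \<longrightarrow> net_tendsto le (\<lambda>i. ham_dist (D i) (\<sigma> i m1) (\<sigma> i m2)) 1)
   \<and> (\<forall>K. finite K \<longrightarrow> (\<exists>\<Delta>::nat. \<Delta> \<ge> 1 \<and>
        (\<forall>i. \<forall>k\<in>K. \<forall>v\<in>D i. card {u\<in>D i. \<sigma> i k u = v} \<le> \<Delta>)))"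

definition monoid_action :: "('m::monoid_mult \<Rightarrow> 'x \<Rightarrow> 'x) \<Rightarrow> bool" where
  "monoid_action act \<longleftrightarrow> (\<forall>x. act 1 x = x) \<and> (\<forall>m1 m2 x. act (m1 * m2) x = act m1 (act m2 x))"

definition pseudometric :: "('x \<Rightarrow> 'x \<Rightarrow> real) \<Rightarrow> bool" where
  "pseudometric \<rho> \<longleftrightarrow> (\<forall>x. \<rho> x x = 0) \<and> (\<forall>x y. \<rho> x y \<ge> 0) \<and> (\<forall>x y. \<rho> x y = \<rho> y x)
     \<and> (\<forall>x y z. \<rho> x z \<le> \<rho> x y + \<rho> y z)"

definition dyn_generating :: "('m \<Rightarrow> 'x \<Rightarrow> 'x) \<Rightarrow> ('x \<Rightarrow> 'x \<Rightarrow> real) \<Rightarrow> bool" where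
  "dyn_generating act \<rho> \<longleftrightarrow> (\<forall>x y. x \<noteq> y \<longrightarrow> (\<exists>m. \<rho> (act m x) (act m y) > 0))"

definition rho2 :: "'d set \<Rightarrow> ('x \<Rightarrow> 'x \<Rightarrow> real) \<Rightarrow> ('d \<Rightarrow> 'x) \<Rightarrow> ('d \<Rightarrow> 'x) \<Rightarrow> real" where
  "rho2 D \<rho> \<phi> \<psi> = sqrt ((1 / real (card D)) * (\<Sum>v\<in>D. (\<rho> (\<phi> v) (\<psi> v))\<^sup>2))"

text \<open>Map(X,M,rho,F,delta,sigma); elements of X^D are functions 'd => 'x (values off D irrelevant).\<close>
definition MapSet :: "('m \<Rightarrow> 'x \<Rightarrow> 'x) \<Rightarrow> ('x \<Rightarrow> 'x \<Rightarrow> real) \<Rightarrow> 'm set \<Rightarrow> real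
      \<Rightarrow> 'd set \<Rightarrow> ('m \<Rightarrow> 'd \<Rightarrow> 'd) \<Rightarrow> ('d \<Rightarrow> 'x) set" where
  "MapSet act \<rho> F \<delta> D \<sigma> = {\<phi>. \<forall>m\<in>F. rho2 D \<rho> (\<phi> \<circ> \<sigma> m) (\<lambda>v. act m (\<phi> v)) \<le> \<delta>}"

end

theory Submission
  imports Defs
begin


lemma ev_conj:
  assumes "directed_rel le" "\<exists>i0. \<forall>i. le i0 i \<longrightarrow> P i" "\<exists>i0. \<forall>i. le i0 i \<longrightarrow> Q i"
  shows "\<exists>i0. \<forall>i. le i0 i \<longrightarrow> P i \<and> Q i"
proof -
  obtain a b where a: "\<forall>i. le a i \<longrightarrow> P i" and b: "\<forall>i. le b i \<longrightarrow> Q i" using assms by blast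
  obtain k where "le a k" "le b k" using assms(1) unfolding directed_rel_def by blast
  then show ?thesis using a b assms(1) unfolding directed_rel_def by blast
qed

lemma ev_finite_all:
  assumes "directed_rel le" "finite S" "\<forall>x\<in>S. \<exists>i0. \<forall>i. le i0 i \<longrightarrow> P x i"
  shows "\<exists>i0. \<forall>i. le i0 i \<longrightarrow> (\<forall>x\<in>S. P x i)"
  using assms(2,3)
proof (induction S rule: finite_induct)
  case empty
  then show ?case by auto
next
  case (insert a S)
  then have "\<exists>i0. \<forall>i. le i0 i \<longrightarrow> P a i \<and> (\<forall>x\<in>S. P x i)"
    by (intro ev_conj[OF assms(1)]) auto
  then show ?case by auto
qed

lemma cheb:
  fixes f :: "'d \<Rightarrow> real"
  assumes "finite D" "t > 0"
  shows "real (card {v\<in>D. t < f v}) * t\<^sup>2 \<le> (\<Sum>v\<in>D. (f v)\<^sup>2)"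
proof -
  have "real (card {v\<in>D. t < f v}) * t\<^sup>2 = (\<Sum>v\<in>{v\<in>D. t < f v}. t\<^sup>2)" by simp
  also have "\<dots> \<le> (\<Sum>v\<in>{v\<in>D. t < f v}. (f v)\<^sup>2)"
    by (rule sum_mono) (use assms in \<open>auto intro!: power_strict_mono less_imp_le\<close>)
  also have "\<dots> \<le> (\<Sum>v\<in>D. (f v)\<^sup>2)"
    by (rule sum_mono2) (use assms in auto)
  finally show ?thesis .
qed

lemma rho2_le:
  assumes "finite D" "D \<noteq> {}" "rho2 D \<rho> \<phi> \<psi> \<le> d"
  shows "(\<Sum>v\<in>D. (\<rho> (\<phi> v) (\<psi> v))\<^sup>2) \<le> d\<^sup>2 * real (card D)"
proof -
  let ?S = "(\<Sum>v\<in>D. (\<rho> (\<phi> v) (\<psi> v))\<^sup>2)"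
  have n: "real (card D) > 0" using assms by auto
  have nn: "0 \<le> 1 / real (card D) * ?S" using n by (intro mult_nonneg_nonneg sum_nonneg) auto
  have "sqrt (1 / real (card D) * ?S) \<le> d" using assms(3) unfolding rho2_def .
  then have "1 / real (card D) * ?S \<le> d\<^sup>2"
    using nn by (metis real_le_rsqrt real_sqrt_ge_zero order_trans real_sqrt_le_iff sqrt_le_D)
  then show ?thesis using n by (simp add: field_simps)
qed

lemma fiber_card:
  assumes "finite D" "g ` D \<subseteq> D" "\<forall>w\<in>D. card {u\<in>D. g u = w} \<le> \<Delta>" "W \<subseteq> D"
  shows "card {u\<in>D. g u \<in> W} \<le> \<Delta> * card W"
proof -
  have fW: "finite W" using assms finite_subset by blast
  have "{u\<in>D. g u \<in> W} = (\<Union>w\<in>W. {u\<in>D. g u = w})" by auto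
  then have "card {u\<in>D. g u \<in> W} \<le> (\<Sum>w\<in>W. card {u\<in>D. g u = w})"
    using card_UN_le[OF fW] by simp
  also have "\<dots> \<le> (\<Sum>w\<in>W. \<Delta>)" by (rule sum_mono) (use assms in auto)
  finally show ?thesis by (simp add: mult.commute)
qed



lemma key:
  fixes act :: "'m \<Rightarrow> 'x::topological_space \<Rightarrow> 'x" and \<rho> \<rho>' :: "'x \<Rightarrow> 'x \<Rightarrow> real"
  assumes cX: "compact (UNIV::'x set)" and ca: "\<And>m. continuous_on UNIV (act m)"
    and c\<rho>: "continuous_on UNIV (\<lambda>p. \<rho> (fst p) (snd p))"
    and c\<rho>': "continuous_on UNIV (\<lambda>p. \<rho>' (fst p) (snd p))"
    and dg: "dyn_generating act \<rho>'" and pm: "pseudometric \<rho>" and e: "\<epsilon> > 0"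
  shows "\<exists>L \<eta>. finite L \<and> \<eta> > 0 \<and> (\<forall>x y. (\<forall>m\<in>L. \<rho>' (act m x) (act m y) < \<eta>) \<longrightarrow> \<rho> x y < \<epsilon>)"
proof -
  let ?K = "{p::'x\<times>'x. \<epsilon> \<le> \<rho> (fst p) (snd p)}"
  have "closed ?K" by (rule closed_Collect_le[OF continuous_on_const c\<rho>])
  moreover have "compact (UNIV::('x\<times>'x) set)"
    using compact_Times[OF cX cX] by simp
  ultimately have cK: "compact ?K" using closed_Int_compact[of ?K UNIV] by simp
  define g where "g m q = \<rho>' (act m (fst q)) (act m (snd q))" for m q
  have cg: "continuous_on UNIV (g m)" for m
  proof -
    have "continuous_on UNIV (\<lambda>q::'x\<times>'x. (act m (fst q), act m (snd q)))"
      by (intro continuous_on_Pair continuous_on_compose2[OF ca continuous_on_fst]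
          continuous_on_compose2[OF ca continuous_on_snd] continuous_on_id) auto
    from continuous_on_compose2[OF c\<rho>' this] show ?thesis unfolding g_def by simp
  qed
  have opn: "open {q. 1 / real (Suc (snd c)) < g (fst c) q}" for c :: "'m \<times> nat"
    by (rule open_Collect_less[OF continuous_on_const cg])
  have cov: "?K \<subseteq> (\<Union>c\<in>UNIV. {q. 1 / real (Suc (snd c)) < g (fst c) q})"
  proof
    fix p assume p: "p \<in> ?K"
    have "fst p \<noteq> snd p"
    proof
      assume "fst p = snd p"
      then have "\<rho> (fst p) (snd p) = 0" using pm unfolding pseudometric_def by metis
      then show False using p e by simp
    qed
    then obtain m where m: "g m p > 0" using dg unfolding dyn_generating_def g_def by blast
    then obtain k where "inverse (real (Suc k)) < g m p" using reals_Archimedean by blast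
    then have "p \<in> {q. 1 / real (Suc (snd (m,k))) < g (fst (m,k)) q}" by (simp add: inverse_eq_divide)
    then show "p \<in> (\<Union>c\<in>UNIV. {q. 1 / real (Suc (snd c)) < g (fst c) q})" by blast
  qed
  obtain T where T0: "T \<subseteq> UNIV" and T: "finite T" "?K \<subseteq> (\<Union>c\<in>T. {q. 1 / real (Suc (snd c)) < g (fst c) q})"
    by (rule compactE_image[OF cK opn cov])
  define N where "N = (\<Sum>t\<in>T. snd t)"
  define \<eta> where "\<eta> = 1 / real (Suc N)"
  have "\<forall>x y. (\<forall>m\<in>fst ` T. \<rho>' (act m x) (act m y) < \<eta>) \<longrightarrow> \<rho> x y < \<epsilon>"
  proof (intro allI impI)
    fix x y assume H: "\<forall>m\<in>fst ` T. \<rho>' (act m x) (act m y) < \<eta>"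
    show "\<rho> x y < \<epsilon>"
    proof (rule ccontr)
      assume "\<not> \<rho> x y < \<epsilon>"
      then have "(x,y) \<in> ?K" by simp
      then obtain t where t: "t \<in> T" "1 / real (Suc (snd t)) < g (fst t) (x,y)" using T by blast
      have "snd t \<le> N" unfolding N_def using member_le_sum[OF t(1) _ T(1), of snd] by simp
      then have "\<eta> \<le> 1 / real (Suc (snd t))" unfolding \<eta>_def by (simp add: frac_le)
      moreover have "g (fst t) (x,y) < \<eta>" using H t(1) unfolding g_def by auto
      ultimately show False using t(2) by linarith
    qed
  qed
  moreover have "\<eta> > 0" unfolding \<eta>_def by simp
  ultimately show ?thesis using T(1) by blast
qed



lemma inner:
  fixes D :: "'d set" and \<sigma> :: "'m::monoid_mult \<Rightarrow> 'd \<Rightarrow> 'd" and \<phi> :: "'d \<Rightarrow> 'x"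
    and act :: "'m \<Rightarrow> 'x \<Rightarrow> 'x" and \<rho> \<rho>' :: "'x \<Rightarrow> 'x \<Rightarrow> real"
  assumes fD: "finite D" and neD: "D \<noteq> {}" and inv: "\<forall>m. \<sigma> m ` D \<subseteq> D"
    and am: "\<forall>m1 m2 x. act (m1 * m2) x = act m1 (act m2 x)"
    and pm': "pseudometric \<rho>'" and pm: "pseudometric \<rho>"
    and B: "\<forall>x y. \<rho> x y \<le> B"
    and key: "\<forall>x y. (\<forall>m\<in>L. \<rho>' (act m x) (act m y) < \<eta>) \<longrightarrow> \<rho> x y < \<epsilon>"
    and fL: "finite L" and \<eta>: "\<eta> > 0"
    and fib: "\<forall>v\<in>D. card {u\<in>D. \<sigma> s u = v} \<le> \<Delta>"
    and ham: "\<forall>m\<in>L. ham_dist D (\<sigma> (m * s)) (\<sigma> m \<circ> \<sigma> s) < \<kappa>"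
    and \<phi>: "\<forall>m\<in>L \<union> (\<lambda>m. m * s) ` L. rho2 D \<rho>' (\<phi> \<circ> \<sigma> m) (\<lambda>v. act m (\<phi> v)) \<le> \<delta>'"
    and ineq: "\<epsilon>\<^sup>2 + B\<^sup>2 * (real (card L) * ((real \<Delta> + 1) * (9 * \<delta>'\<^sup>2 / \<eta>\<^sup>2) + \<kappa>)) \<le> \<delta>\<^sup>2"
    and \<delta>: "\<delta> \<ge> 0"
  shows "rho2 D \<rho> (\<phi> \<circ> \<sigma> s) (\<lambda>v. act s (\<phi> v)) \<le> \<delta>"
proof -
  define n where "n = real (card D)"
  have n: "n > 0" unfolding n_def using fD neD by auto
  have sym': "\<rho>' x y = \<rho>' y x" for x y using pm' unfolding pseudometric_def by blast
  have tri': "\<rho>' x z \<le> \<rho>' x y + \<rho>' y z" for x y z using pm' unfolding pseudometric_def by blast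
  have z': "\<rho>' x x = 0" for x using pm' unfolding pseudometric_def by blast
  have nn: "\<rho> x y \<ge> 0" for x y using pm unfolding pseudometric_def by blast
  define a where "a v = \<rho> (\<phi> (\<sigma> s v)) (act s (\<phi> v))" for v
  define W where "W m = {w\<in>D. \<eta>/3 < \<rho>' (\<phi> (\<sigma> m w)) (act m (\<phi> w))}" for m
  define B1 where "B1 m = {v\<in>D. \<sigma> s v \<in> W m}" for m
  define B2 where "B2 m = {v\<in>D. \<sigma> (m * s) v \<noteq> (\<sigma> m \<circ> \<sigma> s) v}" for m
  define B3 where "B3 m = W (m * s)" for m
  define Bad where "Bad = (\<Union>m\<in>L. B1 m \<union> B2 m \<union> B3 m)"
  have BadD: "Bad \<subseteq> D" unfolding Bad_def B1_def B2_def B3_def W_def by auto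
  have good: "a v < \<epsilon>" if v: "v \<in> D" "v \<notin> Bad" for v
  proof -
    have "\<rho>' (act m (\<phi> (\<sigma> s v))) (act m (act s (\<phi> v))) < \<eta>" if m: "m \<in> L" for m
    proof -
      have sv: "\<sigma> s v \<in> D" using inv v(1) by blast
      have 1: "\<rho>' (act m (\<phi> (\<sigma> s v))) (\<phi> (\<sigma> m (\<sigma> s v))) \<le> \<eta>/3"
        using v m sv sym' unfolding Bad_def B1_def W_def by fastforce
      have 2: "\<sigma> (m * s) v = \<sigma> m (\<sigma> s v)"
        using v m unfolding Bad_def B2_def by auto
      have 3: "\<rho>' (\<phi> (\<sigma> (m * s) v)) (act (m * s) (\<phi> v)) \<le> \<eta>/3"
        using v m unfolding Bad_def B3_def W_def by fastforce
      have "\<rho>' (act m (\<phi> (\<sigma> s v))) (act m (act s (\<phi> v)))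
          \<le> \<rho>' (act m (\<phi> (\<sigma> s v))) (\<phi> (\<sigma> m (\<sigma> s v))) + \<rho>' (\<phi> (\<sigma> (m * s) v)) (act (m * s) (\<phi> v))"
        using tri'[where x="act m (\<phi> (\<sigma> s v))" and y="\<phi> (\<sigma> m (\<sigma> s v))" and z="act m (act s (\<phi> v))"] 2 am by simp
      then show ?thesis using 1 3 \<eta> by linarith
    qed
    then show ?thesis using key unfolding a_def by blast
  qed
  have cW: "real (card (W m)) \<le> 9 * \<delta>'\<^sup>2 / \<eta>\<^sup>2 * n" if "m \<in> L \<union> (\<lambda>m. m * s) ` L" for m
  proof -
    have "real (card (W m)) * (\<eta>/3)\<^sup>2 \<le> (\<Sum>v\<in>D. (\<rho>' ((\<phi> \<circ> \<sigma> m) v) (act m (\<phi> v)))\<^sup>2)"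
      unfolding W_def using cheb[OF fD, of "\<eta>/3" "\<lambda>v. \<rho>' ((\<phi> \<circ> \<sigma> m) v) (act m (\<phi> v))"] \<eta> by simp
    also have "\<dots> \<le> \<delta>'\<^sup>2 * n" unfolding n_def
      by (rule rho2_le[OF fD neD]) (use \<phi> that in blast)
    finally have "real (card (W m)) * (\<eta>/3)\<^sup>2 \<le> \<delta>'\<^sup>2 * n" .
    then show ?thesis using \<eta> by (simp add: field_simps power_divide)
  qed
  have cB: "real (card (B1 m \<union> B2 m \<union> B3 m)) \<le> ((real \<Delta> + 1) * (9 * \<delta>'\<^sup>2 / \<eta>\<^sup>2) + \<kappa>) * n"
    if m: "m \<in> L" for m
  proof -
    have WD: "W m \<subseteq> D" unfolding W_def by auto
    have "card (B1 m) \<le> \<Delta> * card (W m)" unfolding B1_def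
      by (rule fiber_card[OF fD]) (use inv fib WD in auto)
    then have c1: "real (card (B1 m)) \<le> real \<Delta> * (9 * \<delta>'\<^sup>2 / \<eta>\<^sup>2 * n)"
      using cW[of m] m by (smt (verit) mult_left_mono of_nat_0_le_iff of_nat_mono of_nat_mult UnI1)
    have "ham_dist D (\<sigma> (m * s)) (\<sigma> m \<circ> \<sigma> s) = real (card (B2 m)) / n"
      unfolding ham_dist_def B2_def n_def by simp
    then have "real (card (B2 m)) / n < \<kappa>" using ham m by metis
    then have c2: "real (card (B2 m)) \<le> \<kappa> * n" using n by (simp add: divide_less_eq)
    have c3: "real (card (B3 m)) \<le> 9 * \<delta>'\<^sup>2 / \<eta>\<^sup>2 * n" unfolding B3_def using cW m by blast
    have "card (B1 m \<union> B2 m \<union> B3 m) \<le> card (B1 m) + card (B2 m) + card (B3 m)"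
      by (meson card_Un_le add_le_mono order_trans le_refl)
    then have "real (card (B1 m \<union> B2 m \<union> B3 m)) \<le> real (card (B1 m)) + real (card (B2 m)) + real (card (B3 m))"
      by linarith
    moreover have "((real \<Delta> + 1) * (9 * \<delta>'\<^sup>2 / \<eta>\<^sup>2) + \<kappa>) * n = real \<Delta> * (9 * \<delta>'\<^sup>2 / \<eta>\<^sup>2 * n) + \<kappa> * n + 9 * \<delta>'\<^sup>2 / \<eta>\<^sup>2 * n"
      by (simp only: algebra_simps)
    ultimately show ?thesis using c1 c2 c3 by linarith
  qed
  have cBad: "real (card Bad) \<le> real (card L) * (((real \<Delta> + 1) * (9 * \<delta>'\<^sup>2 / \<eta>\<^sup>2) + \<kappa>) * n)"
  proof -
    have "card Bad \<le> (\<Sum>m\<in>L. card (B1 m \<union> B2 m \<union> B3 m))" unfolding Bad_def by (rule card_UN_le[OF fL])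
    then have "real (card Bad) \<le> (\<Sum>m\<in>L. real (card (B1 m \<union> B2 m \<union> B3 m)))"
      by (metis of_nat_le_iff of_nat_sum)
    also have "\<dots> \<le> (\<Sum>m\<in>L. ((real \<Delta> + 1) * (9 * \<delta>'\<^sup>2 / \<eta>\<^sup>2) + \<kappa>) * n)"
      by (rule sum_mono) (use cB in blast)
    finally show ?thesis by simp
  qed
  have an: "0 \<le> a v" for v unfolding a_def by (rule nn)
  have fBad: "finite Bad" using BadD fD finite_subset by blast
  have "(\<Sum>v\<in>D. (a v)\<^sup>2) = (\<Sum>v\<in>D - Bad. (a v)\<^sup>2) + (\<Sum>v\<in>Bad. (a v)\<^sup>2)"
    by (rule sum.subset_diff[OF BadD fD])
  also have "(\<Sum>v\<in>D - Bad. (a v)\<^sup>2) \<le> (\<Sum>v\<in>D - Bad. \<epsilon>\<^sup>2)"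
    by (rule sum_mono) (use power_mono[OF less_imp_le[OF good] an] in auto)
  also have "\<dots> \<le> n * \<epsilon>\<^sup>2" unfolding n_def using fD
    by (simp add: card_Diff_subset[OF fBad BadD]) (simp add: card_mono[OF fD BadD] of_nat_diff mult_right_mono)
  also have "(\<Sum>v\<in>Bad. (a v)\<^sup>2) \<le> (\<Sum>v\<in>Bad. B\<^sup>2)"
    by (rule sum_mono) (use power_mono[OF _ an] B in \<open>auto simp: a_def\<close>)
  also have "\<dots> = real (card Bad) * B\<^sup>2" by simp
  also have "\<dots> \<le> real (card L) * (((real \<Delta> + 1) * (9 * \<delta>'\<^sup>2 / \<eta>\<^sup>2) + \<kappa>) * n) * B\<^sup>2"
    by (rule mult_right_mono[OF cBad]) simp
  finally have S: "(\<Sum>v\<in>D. (a v)\<^sup>2) \<le> n * (\<epsilon>\<^sup>2 + B\<^sup>2 * (real (card L) * ((real \<Delta> + 1) * (9 * \<delta>'\<^sup>2 / \<eta>\<^sup>2) + \<kappa>)))"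
    by (simp add: algebra_simps)
  also have "\<dots> \<le> n * \<delta>\<^sup>2" using ineq n by simp
  finally have "1 / n * (\<Sum>v\<in>D. (a v)\<^sup>2) \<le> \<delta>\<^sup>2" using n by (simp add: field_simps)
  then have "sqrt (1 / n * (\<Sum>v\<in>D. (a v)\<^sup>2)) \<le> \<delta>" using \<delta> real_le_lsqrt by blast
  then show ?thesis unfolding rho2_def a_def n_def by simp
qed


theorem lemma4p5:
  fixes act :: "'m::monoid_mult \<Rightarrow> 'x::topological_space \<Rightarrow> 'x"
    and le :: "'i \<Rightarrow> 'i \<Rightarrow> bool"
    and D :: "'i \<Rightarrow> 'd set"
    and \<sigma> :: "'i \<Rightarrow> 'm \<Rightarrow> 'd \<Rightarrow> 'd"
    and \<rho> \<rho>' :: "'x \<Rightarrow> 'x \<Rightarrow> real"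
    and F :: "'m set" and \<delta> :: real
  assumes "compact (UNIV :: 'x set)"
    and "monoid_action act"
    and "\<And>m. continuous_on UNIV (act m)"
    and "strong_sofic_approx le D \<sigma>"
    and "pseudometric \<rho>" and "continuous_on UNIV (\<lambda>p. \<rho> (fst p) (snd p))"
    and "pseudometric \<rho>'" and "continuous_on UNIV (\<lambda>p. \<rho>' (fst p) (snd p))"
    and "dyn_generating act \<rho>'"
    and "finite F" and "\<delta> > 0"
  shows "\<exists>F' \<delta>' i0. finite F' \<and> \<delta>' > 0 \<and>
           (\<forall>i. le i0 i \<longrightarrow> MapSet act \<rho>' F' \<delta>' (D i) (\<sigma> i) \<subseteq> MapSet act \<rho> F \<delta> (D i) (\<sigma> i))"
  proof -
  have dir: "directed_rel le" and Dfin: "\<forall>i. finite (D i) \<and> D i \<noteq> {}"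
    and inv: "\<forall>i m. \<sigma> i m ` D i \<subseteq> D i"
    and sof: "\<forall>m1 m2. net_tendsto le (\<lambda>i. ham_dist (D i) (\<sigma> i (m1 * m2)) (\<sigma> i m1 \<circ> \<sigma> i m2)) 0"
    and bnd: "\<forall>K. finite K \<longrightarrow> (\<exists>\<Delta>::nat. \<Delta> \<ge> 1 \<and>
        (\<forall>i. \<forall>k\<in>K. \<forall>v\<in>D i. card {u\<in>D i. \<sigma> i k u = v} \<le> \<Delta>))"
    using assms(4) unfolding strong_sofic_approx_def by auto
  have am: "\<forall>m1 m2 x. act (m1 * m2) x = act m1 (act m2 x)" using assms(2) unfolding monoid_action_def by blast
  have cXX: "compact (UNIV::('x\<times>'x) set)" using compact_Times[OF assms(1) assms(1)] by simp
  obtain p0 where p0: "\<forall>q\<in>UNIV. \<rho> (fst q) (snd q) \<le> \<rho> (fst p0) (snd p0)"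
    using continuous_attains_sup[OF cXX _ assms(6)] by blast
  define B where "B = \<rho> (fst p0) (snd p0)"
  have B: "\<forall>x y. \<rho> x y \<le> B" unfolding B_def using p0 by (metis UNIV_I fst_conv snd_conv)
  define \<epsilon> where "\<epsilon> = \<delta> / 2"
  have e0: "\<epsilon> > 0" unfolding \<epsilon>_def using assms(11) by simp
  obtain L \<eta> where fL: "finite L" and \<eta>: "\<eta> > 0"
    and key: "\<forall>x y. (\<forall>m\<in>L. \<rho>' (act m x) (act m y) < \<eta>) \<longrightarrow> \<rho> x y < \<epsilon>"
    using key[OF assms(1) assms(3) assms(6) assms(8) assms(9) assms(5) e0] by blast
  obtain \<Delta> :: nat where fib: "\<forall>i. \<forall>k\<in>F. \<forall>v\<in>D i. card {u\<in>D i. \<sigma> i k u = v} \<le> \<Delta>"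
    using bnd assms(10) by blast
  define l where "l = real (card L)"
  define \<beta> where "\<beta> = \<delta>\<^sup>2 / (2 * (B\<^sup>2 + 1))"
  define \<kappa> where "\<kappa> = \<beta> / (2 * (l + 1))"
  define \<delta>' where "\<delta>' = sqrt (\<beta> * \<eta>\<^sup>2 / (18 * (l + 1) * (real \<Delta> + 1)))"
  define F' where "F' = L \<union> (\<lambda>p. fst p * snd p) ` (L \<times> F)"
  have l0: "l \<ge> 0" unfolding l_def by simp
  have Bp: "B\<^sup>2 + 1 > 0" by (simp add: add_nonneg_pos)
  have \<beta>0: "\<beta> > 0" unfolding \<beta>_def using assms(11) Bp by (intro divide_pos_pos) auto
  have \<kappa>0: "\<kappa> > 0" unfolding \<kappa>_def using \<beta>0 l0 by simp
  have \<delta>'0: "\<delta>' > 0" unfolding \<delta>'_def using \<beta>0 l0 \<eta> by simp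
  have "\<forall>p\<in>L \<times> F. \<exists>i0. \<forall>i. le i0 i \<longrightarrow>
      ham_dist (D i) (\<sigma> i (fst p * snd p)) (\<sigma> i (fst p) \<circ> \<sigma> i (snd p)) < \<kappa>"
  proof
    fix p assume "p \<in> L \<times> F"
    from sof have "net_tendsto le (\<lambda>i. ham_dist (D i) (\<sigma> i (fst p * snd p)) (\<sigma> i (fst p) \<circ> \<sigma> i (snd p))) 0"
      by blast
    then obtain i0 where "\<forall>i. le i0 i \<longrightarrow> \<bar>ham_dist (D i) (\<sigma> i (fst p * snd p)) (\<sigma> i (fst p) \<circ> \<sigma> i (snd p)) - 0\<bar> < \<kappa>"
      unfolding net_tendsto_def using \<kappa>0 by blast
    then show "\<exists>i0. \<forall>i. le i0 i \<longrightarrow>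
      ham_dist (D i) (\<sigma> i (fst p * snd p)) (\<sigma> i (fst p) \<circ> \<sigma> i (snd p)) < \<kappa>" by force
  qed
  note hev = this
  from ev_finite_all[OF dir finite_cartesian_product[OF fL assms(10)] hev]
  obtain i0 where i0: "\<forall>i. le i0 i \<longrightarrow> (\<forall>p\<in>L \<times> F.
      ham_dist (D i) (\<sigma> i (fst p * snd p)) (\<sigma> i (fst p) \<circ> \<sigma> i (snd p)) < \<kappa>)" by (elim exE) 
  have d2: "\<delta>'\<^sup>2 = \<beta> * \<eta>\<^sup>2 / (18 * (l + 1) * (real \<Delta> + 1))"
    unfolding \<delta>'_def using \<beta>0 l0 by (intro real_sqrt_pow2) simp
  have t1: "(real \<Delta> + 1) * (9 * \<delta>'\<^sup>2 / \<eta>\<^sup>2) = \<kappa>"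
  proof -
    have c: "18 * (l + 1) * (real \<Delta> + 1) > 0" using l0 by (simp add: add_nonneg_pos)
    have "9 * (\<beta> * \<eta>\<^sup>2 / (18 * (l + 1) * (real \<Delta> + 1))) / \<eta>\<^sup>2 = 9 * \<beta> / (18 * (l + 1) * (real \<Delta> + 1))"
      using \<eta> by simp
    also have "(real \<Delta> + 1) * \<dots> = \<beta> / (2 * (l + 1))"
      using c by (simp add: divide_simps)
    finally show ?thesis unfolding d2 \<kappa>_def by simp
  qed
  have t2: "l * (\<kappa> + \<kappa>) \<le> \<beta>"
  proof -
    have lp: "l + 1 > 0" using l0 by simp
    have "l * (\<kappa> + \<kappa>) = \<beta> * (l / (l + 1))" unfolding \<kappa>_def using lp by (simp add: divide_simps)
    also have "\<dots> \<le> \<beta> * 1" using \<beta>0 l0 by (intro mult_left_mono) auto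
    finally show ?thesis by simp
  qed
  have t3: "B\<^sup>2 * \<beta> \<le> \<delta>\<^sup>2 / 2"
  proof -
    have "B\<^sup>2 * \<beta> = \<delta>\<^sup>2 / 2 * (B\<^sup>2 / (B\<^sup>2 + 1))" unfolding \<beta>_def by (simp add: field_simps)
    also have "\<dots> \<le> \<delta>\<^sup>2 / 2 * 1" using Bp by (intro mult_left_mono) (auto simp: divide_simps)
    finally show ?thesis by simp
  qed
  have ineq: "\<epsilon>\<^sup>2 + B\<^sup>2 * (real (card L) * ((real \<Delta> + 1) * (9 * \<delta>'\<^sup>2 / \<eta>\<^sup>2) + \<kappa>)) \<le> \<delta>\<^sup>2"
  proof -
    have "B\<^sup>2 * (real (card L) * ((real \<Delta> + 1) * (9 * \<delta>'\<^sup>2 / \<eta>\<^sup>2) + \<kappa>)) = B\<^sup>2 * (l * (\<kappa> + \<kappa>))"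
      unfolding t1 l_def ..
    also have "\<dots> \<le> B\<^sup>2 * \<beta>" using t2 by (intro mult_left_mono) auto
    finally have "B\<^sup>2 * (real (card L) * ((real \<Delta> + 1) * (9 * \<delta>'\<^sup>2 / \<eta>\<^sup>2) + \<kappa>)) \<le> \<delta>\<^sup>2 / 2"
      using t3 by linarith
    moreover have "\<epsilon>\<^sup>2 = \<delta>\<^sup>2 / 4" unfolding \<epsilon>_def by (simp add: power_divide)
    moreover have "\<delta>\<^sup>2 \<ge> 0" by simp
    ultimately show ?thesis by linarith
  qed
  have "MapSet act \<rho>' F' \<delta>' (D i) (\<sigma> i) \<subseteq> MapSet act \<rho> F \<delta> (D i) (\<sigma> i)" if i: "le i0 i" for i
  proof
    fix \<phi> assume \<phi>: "\<phi> \<in> MapSet act \<rho>' F' \<delta>' (D i) (\<sigma> i)"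
    have "rho2 (D i) \<rho> (\<phi> \<circ> \<sigma> i s) (\<lambda>v. act s (\<phi> v)) \<le> \<delta>" if s: "s \<in> F" for s
    proof (rule inner[where L=L and \<eta>=\<eta> and \<epsilon>=\<epsilon> and B=B and \<Delta>=\<Delta> and \<kappa>=\<kappa> and \<delta>'=\<delta>' and \<rho>'=\<rho>'])
      show "finite (D i)" "D i \<noteq> {}" using Dfin by auto
      show "\<forall>m. \<sigma> i m ` D i \<subseteq> D i" using inv by auto
      show "\<forall>m1 m2 x. act (m1 * m2) x = act m1 (act m2 x)" by (rule am)
      show "pseudometric \<rho>'" "pseudometric \<rho>" by (rule assms(7), rule assms(5))
      show "\<forall>x y. \<rho> x y \<le> B" by (rule B)
      show "\<forall>x y. (\<forall>m\<in>L. \<rho>' (act m x) (act m y) < \<eta>) \<longrightarrow> \<rho> x y < \<epsilon>" by (rule key)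
      show "finite L" "\<eta> > 0" by (rule fL, rule \<eta>)
      show "\<forall>v\<in>D i. card {u\<in>D i. \<sigma> i s u = v} \<le> \<Delta>" using fib s by blast
      show "\<forall>m\<in>L. ham_dist (D i) (\<sigma> i (m * s)) (\<sigma> i m \<circ> \<sigma> i s) < \<kappa>"
      proof
        fix m assume m: "m \<in> L"
        then have "(m, s) \<in> L \<times> F" using s by simp
        then show "ham_dist (D i) (\<sigma> i (m * s)) (\<sigma> i m \<circ> \<sigma> i s) < \<kappa>"
          using i0 i by (metis fst_conv snd_conv)
      qed
      have "L \<union> (\<lambda>m. m * s) ` L \<subseteq> F'" 
      proof
        fix m assume "m \<in> L \<union> (\<lambda>m. m * s) ` L"
        then show "m \<in> F'"
        proof
          assume "m \<in> L" then show ?thesis unfolding F'_def by blast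
        next
          assume "m \<in> (\<lambda>m. m * s) ` L"
          then obtain k where k: "k \<in> L" "m = k * s" by blast
          then have "(k, s) \<in> L \<times> F" using s by simp
          then have "(\<lambda>p. fst p * snd p) (k, s) \<in> (\<lambda>p. fst p * snd p) ` (L \<times> F)" by (rule imageI)
          then show ?thesis unfolding F'_def using k by simp
        qed
      qed
      then show "\<forall>m\<in>L \<union> (\<lambda>m. m * s) ` L. rho2 (D i) \<rho>' (\<phi> \<circ> \<sigma> i m) (\<lambda>v. act m (\<phi> v)) \<le> \<delta>'"
        using \<phi> unfolding MapSet_def by blast
      show "\<epsilon>\<^sup>2 + B\<^sup>2 * (real (card L) * ((real \<Delta> + 1) * (9 * \<delta>'\<^sup>2 / \<eta>\<^sup>2) + \<kappa>)) \<le> \<delta>\<^sup>2" by (rule ineq)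
      show "\<delta> \<ge> 0" using assms(11) by simp
    qed
    then show "\<phi> \<in> MapSet act \<rho> F \<delta> (D i) (\<sigma> i)" unfolding MapSet_def by blast
  qed
  moreover have "finite F'" unfolding F'_def using fL assms(10) by simp
  ultimately show ?thesis using \<delta>'0 by blast
qed


end
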